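(* Let $n$ be an odd positive integer and let $h\ge 2$ be an integer. Then there exists a $(2n+1)\times(2n+1)$ matrix $B$, all of whose entries lie in $\{0,1,\ldots,h\}$, which has two distinct real eigenvalues $\lambda\neq\mu$ with $|\lambda-\mu|\le h^{-\frac{(n+3)(n-3)}{4}}$. Moreover, $\lambda$ and $\mu$ are both roots of a single factor of the characteristic polynomial $\chi(B)$ which is irreducible over $\mathbb{Z}$ and has degree $n+1$.
   Context: $\chi(B)=\det(tI-B)$ denotes the characteristic polynomial of $B$, a monic polynomial with integer coefficients. *)

theory Defs
  imports Jordan_Normal_Form.Char_Poly "HOL-Computational_Algebra.Polynomial_Factorial"
begin

end

theory Submission
  imports Defs
begin



lemma eis_core:
  fixes f a b :: "int poly" and p :: int
  assumes pr: "prime p" and fab: "f = a * b" and da: "degree a < degree f"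
    and a0: "p dvd coeff a 0" and b0: "\<not> p dvd coeff b 0"
    and la: "\<not> p dvd lead_coeff a"
    and fc: "\<forall>i < degree f. p dvd coeff f i"
  shows False
proof -
  have ex: "\<exists>i. \<not> p dvd coeff a i" using la by blast
  define i where "i = (LEAST i. \<not> p dvd coeff a i)"
  have ai: "\<not> p dvd coeff a i" unfolding i_def by (rule LeastI_ex[OF ex])
  have lt: "\<And>j. j < i \<Longrightarrow> p dvd coeff a j" unfolding i_def using not_less_Least by blast
  have ile: "i \<le> degree a" using ai le_degree by (metis dvd_0_right)
  have i0: "i \<noteq> 0" using ai a0 by (metis)
  then obtain k where k: "i = Suc k" by (cases i) auto
  have "coeff f i = (\<Sum>j\<le>i. coeff a j * coeff b (i - j))" using fab coeff_mult by blast
  also have "\<dots> = (\<Sum>j\<le>k. coeff a j * coeff b (i - j)) + coeff a i * coeff b 0"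
    using k by simp
  finally have eq: "coeff f i = (\<Sum>j\<le>k. coeff a j * coeff b (i - j)) + coeff a i * coeff b 0" .
  have d1: "p dvd (\<Sum>j\<le>k. coeff a j * coeff b (i - j))"
    by (rule dvd_sum) (use lt k in auto)
  have d2: "p dvd coeff f i" using fc ile da by auto
  have "p dvd coeff a i * coeff b 0" using d1 d2 eq by (metis dvd_add_right_iff)
  then show False using pr ai b0 prime_dvd_mult_iff by blast
qed

lemma eisenstein:
  fixes f :: "int poly" and p :: int
  assumes pr: "prime p" and lc: "lead_coeff f = 1" and df: "degree f \<ge> 1"
    and fc: "\<forall>i < degree f. p dvd coeff f i" and f0: "\<not> p^2 dvd coeff f 0"
  shows "irreducible f"
proof (rule irreducibleI)
  show "f \<noteq> 0" using lc by auto
  show "\<not> is_unit f" using df by (auto simp: is_unit_poly_iff)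
  fix a b assume fab: "f = a * b"
  have a0: "a \<noteq> 0" and b0: "b \<noteq> 0" using fab \<open>f \<noteq> 0\<close> by auto
  have lcm: "lead_coeff a * lead_coeff b = 1" using lc fab by (simp add: lead_coeff_mult)
  hence ua: "is_unit (lead_coeff a)" and ub: "is_unit (lead_coeff b)"
    by (metis dvd_triv_left dvd_triv_right)+
  have nla: "\<not> p dvd lead_coeff a" using ua pr by (meson dvd_trans not_prime_unit prime_imp_prime_elem prime_elem_def) 
  have nlb: "\<not> p dvd lead_coeff b" using ub pr by (meson dvd_trans not_prime_unit prime_imp_prime_elem prime_elem_def)
  have deg: "degree f = degree a + degree b" using fab a0 b0 by (simp add: degree_mult_eq)
  show "is_unit a \<or> is_unit b"
  proof (rule ccontr)
    assume nu: "\<not> (is_unit a \<or> is_unit b)"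
    have "degree a \<noteq> 0"
    proof
      assume "degree a = 0"
      then have "a = [:lead_coeff a:]" by (metis degree_0_id)
      then have "is_unit a" using ua by (metis is_unit_const_poly_iff)
      then show False using nu by auto
    qed
    moreover have "degree b \<noteq> 0"
    proof
      assume "degree b = 0"
      then have "b = [:lead_coeff b:]" by (metis degree_0_id)
      then have "is_unit b" using ub by (metis is_unit_const_poly_iff)
      then show False using nu by auto
    qed
    ultimately have da: "degree a < degree f" and db: "degree b < degree f" using deg by auto
    have c0: "coeff f 0 = coeff a 0 * coeff b 0" using fab by (simp add: coeff_mult)
    have "p dvd coeff f 0" using fc df by auto
    hence "p dvd coeff a 0 \<or> p dvd coeff b 0" using c0 pr prime_dvd_mult_iff by auto
    moreover have "\<not> (p dvd coeff a 0 \<and> p dvd coeff b 0)"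
    proof
      assume "p dvd coeff a 0 \<and> p dvd coeff b 0"
      then have "p^2 dvd coeff f 0" using c0 by (simp add: mult_dvd_mono power2_eq_square)
      then show False using f0 by auto
    qed
    ultimately show False
    proof (elim disjE)
      assume "p dvd coeff a 0"
      then show False using eis_core[OF pr fab da _ _ nla fc] \<open>\<not> (p dvd coeff a 0 \<and> p dvd coeff b 0)\<close> by blast
    next
      assume "p dvd coeff b 0"
      have fba: "f = b * a" using fab by (simp add: mult.commute)
      then show False using eis_core[OF pr fba db _ _ nlb fc] \<open>p dvd coeff b 0\<close> \<open>\<not> (p dvd coeff a 0 \<and> p dvd coeff b 0)\<close> by blast
    qed
  qed
qed


lemma eval_hom:
  fixes x :: real
  shows "poly (of_int_poly (u * q + r)) x = poly (of_int_poly u) x * poly (of_int_poly q) x + poly (of_int_poly r) x"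
    and "poly (of_int_poly (Polynomial.smult a f)) x = of_int a * poly (of_int_poly f) x"
  by (simp_all add: hom_distribs)

lemma deg_bound:
  fixes f :: "int poly" and x :: real
  assumes irr: "irreducible f" and fx: "poly (of_int_poly f) x = 0"
  shows "u \<noteq> 0 \<Longrightarrow> poly (of_int_poly u) x = 0 \<Longrightarrow> degree f \<le> degree u"
proof (induction "degree u" arbitrary: u rule: less_induct)
  case less
  have pf: "prime_elem f" using irr by (rule irreducible_imp_prime_poly)
  define r where "r = pseudo_mod f u"
  obtain a q where a: "a \<noteq> 0" and eq: "Polynomial.smult a f = u * q + r"
    using pseudo_mod(1)[OF less.prems(1)] unfolding r_def by blast
  have rd: "r = 0 \<or> degree r < degree u" using pseudo_mod(2)[OF less.prems(1)] unfolding r_def by blast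
  have "poly (of_int_poly r) x = 0"
  proof -
    have "poly (of_int_poly (Polynomial.smult a f)) x = poly (of_int_poly (u*q+r)) x" using eq by simp
    then show ?thesis unfolding eval_hom using fx less.prems(2) by simp
  qed
  show ?case
  proof (cases "r = 0")
    case False
    then have "degree r < degree u" using rd by auto
    with less.hyps[of r] False \<open>poly (of_int_poly r) x = 0\<close> show ?thesis by auto
  next
    case True
    have fne: "f \<noteq> 0" using irr by auto
    have "f dvd u * q" using eq True by (metis add.right_neutral dvd_smult dvd_refl)
    then have "f dvd u \<or> f dvd q" using pf prime_elem_dvd_mult_iff by blast
    then show ?thesis
    proof
      assume "f dvd u" then show ?thesis using less.prems(1) by (rule dvd_imp_degree_le)
    next
      assume fq: "f dvd q"
      have "Polynomial.smult a f \<noteq> 0" using a fne by auto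
      then have qne: "q \<noteq> 0" using eq True by auto
      have "degree f \<le> degree q" using fq qne by (rule dvd_imp_degree_le)
      moreover have "degree (Polynomial.smult a f) = degree u + degree q"
        using eq True qne less.prems(1) by (simp add: degree_mult_eq)
      ultimately have "degree u = 0" using a by simp
      then obtain c where "u = [:c:]" by (metis degree_0_id)
      then show ?thesis using less.prems by auto
    qed
  qed
qed

lemma irr_root_dvd:
  fixes f g :: "int poly" and x :: real
  assumes irr: "irreducible f" and fx: "poly (of_int_poly f) x = 0"
    and gx: "poly (of_int_poly g) x = 0"
  shows "f dvd g"
proof -
  have fne: "f \<noteq> 0" using irr by auto
  have pf: "prime_elem f" using irr by (rule irreducible_imp_prime_poly)
  define r where "r = pseudo_mod g f"
  obtain a q where a: "a \<noteq> 0" and eq: "Polynomial.smult a g = f * q + r"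
    using pseudo_mod(1)[OF fne] unfolding r_def by blast
  have rd: "r = 0 \<or> degree r < degree f" using pseudo_mod(2)[OF fne] unfolding r_def by blast
  have rx: "poly (of_int_poly r) x = 0"
  proof -
    have "poly (of_int_poly (Polynomial.smult a g)) x = poly (of_int_poly (f*q+r)) x" using eq by simp
    then show ?thesis unfolding eval_hom using fx gx by simp
  qed
  have "r = 0"
  proof (rule ccontr)
    assume "r \<noteq> 0"
    then have "degree f \<le> degree r" using deg_bound[OF irr fx _ rx] by auto
    with rd \<open>r \<noteq> 0\<close> show False by auto
  qed
  have df: "degree f \<noteq> 0"
  proof
    assume "degree f = 0"
    then obtain c where "f = [:c:]" by (metis degree_0_id)
    then show False using fx fne by auto
  qed
  have "f dvd [:a:] * g" using eq \<open>r = 0\<close> by simp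
  then have "f dvd [:a:] \<or> f dvd g" using pf prime_elem_dvd_mult_iff by blast
  then show ?thesis
  proof
    assume "f dvd [:a:]"
    then have "degree f \<le> degree [:a:]" using a by (intro dvd_imp_degree_le) auto
    then show ?thesis using df by simp
  qed
qed



definition ent :: "nat \<Rightarrow> int \<Rightarrow> nat \<Rightarrow> nat \<Rightarrow> int" where
 "ent m h i j = (if i = 0 then (if 4*m+1 \<le> j \<and> j \<le> 4*m+3 then 2 else 0)
   else if i \<le> 4*m then
     (if i = m \<or> i = 3*m then (if j + m = i then 1 else 0)
      else if (i = 2*m \<or> i = 4*m) \<and> j + m + 1 = i then h
      else if j + 1 = i then (if i < m \<or> (2*m < i \<and> i < 3*m) then h else 1)
      else 0)
   else if i \<le> 4*m+3 then (if j = 4*m then 2 else 0) else 0)"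

definition val :: "nat \<Rightarrow> int \<Rightarrow> real \<Rightarrow> nat \<Rightarrow> real" where
  "val m h z k = (if k < m then (of_int h * z)^k else if k < 2*m then z^(k-m+1)
      else z^m * (z + of_int h ^ m))"

definition vv :: "nat \<Rightarrow> int \<Rightarrow> real \<Rightarrow> nat \<Rightarrow> real" where
  "vv m h z i = (if i \<le> 2*m then val m h z i
     else if i \<le> 4*m then val m h z (2*m) * val m h z (i - 2*m)
     else if i \<le> 4*m+3 then 2 * z * (val m h z (2*m))^2 else 0)"

lemma sd1: "(p::nat) < N \<Longrightarrow> (\<Sum>j\<in>{0..<N}. real_of_int (if j = p then w else 0) * F j) = real_of_int w * F p"
proof -
  assume p: "p < N"
  have "(\<Sum>j\<in>{0..<N}. real_of_int (if j = p then w else 0) * F j) = (\<Sum>j\<in>{0..<N}. if j = p then real_of_int w * F j else 0)"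
    by (rule sum.cong) auto
  also have "\<dots> = real_of_int w * F p" using p by (subst sum.delta) auto
  finally show ?thesis .
qed

lemma sd2: "(p::nat) < N \<Longrightarrow> q < N \<Longrightarrow> p \<noteq> q \<Longrightarrow>
  (\<Sum>j\<in>{0..<N}. real_of_int (if j = p then w else if j = q then w' else 0) * F j) = real_of_int w * F p + real_of_int w' * F q"
proof -
  assume a: "p < N" "q < N" "p \<noteq> q"
  have "(\<Sum>j\<in>{0..<N}. real_of_int (if j = p then w else if j = q then w' else 0) * F j) =
     (\<Sum>j\<in>{0..<N}. real_of_int (if j = p then w else 0) * F j + real_of_int (if j = q then w' else 0) * F j)"
    by (rule sum.cong) (use a in auto)
  also have "\<dots> = real_of_int w * F p + real_of_int w' * F q" by (simp add: sum.distrib sd1 a)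
  finally show ?thesis .
qed


lemma sd3: "(p::nat) < N \<Longrightarrow> q < N \<Longrightarrow> r < N \<Longrightarrow> p \<noteq> q \<Longrightarrow> p \<noteq> r \<Longrightarrow> q \<noteq> r \<Longrightarrow>
  (\<Sum>j\<in>{0..<N}. real_of_int (if j = p \<or> j = q \<or> j = r then w else 0) * F j) = real_of_int w * (F p + F q + F r)"
proof -
  assume a: "p < N" "q < N" "r < N" "p \<noteq> q" "p \<noteq> r" "q \<noteq> r"
  have "(\<Sum>j\<in>{0..<N}. real_of_int (if j = p \<or> j = q \<or> j = r then w else 0) * F j) =
     (\<Sum>j\<in>{0..<N}. real_of_int (if j = p then w else 0) * F j + real_of_int (if j = q then w else 0) * F j
        + real_of_int (if j = r then w else 0) * F j)"
    by (rule sum.cong) (use a in auto)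
  also have "\<dots> = real_of_int w * (F p + F q + F r)"
    by (simp only: sum.distrib sd1[OF a(1)] sd1[OF a(2)] sd1[OF a(3)]) (simp add: algebra_simps)
  finally show ?thesis .
qed

context
  fixes m :: nat and h :: int and x z :: real
  assumes m1: "1 \<le> m" and xz: "x * z = 1"
begin

lemma G1: "1 \<le> k \<Longrightarrow> k < m \<Longrightarrow> of_int h * val m h z (k-1) = x * val m h z k"
proof -
  assume k: "1 \<le> k" "k < m"
  then obtain l where l: "k = Suc l" by (cases k) auto
  have "x * val m h z k = x * (of_int h * z)^(Suc l)" using k l by (simp add: val_def)
  also have "\<dots> = (x * z) * of_int h * (of_int h * z)^l" by (simp add: algebra_simps)
  also have "\<dots> = of_int h * val m h z (k-1)" using k l xz by (simp add: val_def)
  finally show ?thesis by simp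
qed

lemma G0: "val m h z 0 = 1" using m1 by (simp add: val_def)

lemma G2: "val m h z 0 = x * val m h z m"
  using m1 xz by (simp add: val_def)

lemma G3: "m < k \<Longrightarrow> k < 2*m \<Longrightarrow> val m h z (k-1) = x * val m h z k"
proof -
  assume k: "m < k" "k < 2*m"
  have e: "k - m + 1 = Suc (k - 1 - m + 1)" using k by simp
  have "x * val m h z k = x * z^(k-m+1)" using k by (simp add: val_def)
  also have "\<dots> = (x * z) * z^(k - 1 - m + 1)" by (subst e) (simp add: algebra_simps)
  also have "\<dots> = val m h z (k-1)"
  proof -
    have "\<not> k-1 < m" "k-1 < 2*m" using k by auto
    then show ?thesis using xz by (simp add: val_def)
  qed
  finally show ?thesis by simp
qed

lemma G4: "of_int h * val m h z (m-1) + val m h z (2*m-1) = x * val m h z (2*m)"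
proof -
  obtain l where l: "m = Suc l" using m1 by (cases m) auto
  have a: "val m h z (m-1) = (of_int h * z)^l" using l by (simp add: val_def)
  have b: "val m h z (2*m-1) = z^m" using m1 l by (simp add: val_def)
  have c: "val m h z (2*m) = z^m * (z + of_int h ^ m)" by (simp add: val_def)
  have "x * val m h z (2*m) = (x * z) * (z * z^l) + (x * z) * (of_int h * (z^l * of_int h^l))"
    unfolding c using l by (simp add: algebra_simps power_mult_distrib)
  also have "\<dots> = z * z^l + of_int h * (z^l * of_int h^l)" using xz by simp
  finally show ?thesis unfolding a b using l by (simp add: algebra_simps power_mult_distrib)
qed

lemma vv1: "i \<le> 2*m \<Longrightarrow> vv m h z i = val m h z i" by (simp add: vv_def)
lemma vv2: "2*m \<le> i \<Longrightarrow> i \<le> 4*m \<Longrightarrow> vv m h z i = val m h z (2*m) * val m h z (i - 2*m)"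
  using G0 by (cases "i = 2*m") (auto simp: vv_def)


lemma row_eq:
  assumes R: "12 * z * (val m h z (2*m))^2 = x" and i: "i < 4*m+7"
  shows "(\<Sum>j\<in>{0..<4*m+7}. real_of_int (ent m h i j) * vv m h z j) = x * vv m h z i"
proof -
  let ?S = "\<lambda>i. (\<Sum>j\<in>{0..<4*m+7}. real_of_int (ent m h i j) * vv m h z j)"
  let ?g = "val m h z (2*m)"
  consider "i = 0" | "1 \<le> i \<and> i < m" | "i = m" | "m < i \<and> i < 2*m" | "i = 2*m"
    | "2*m < i \<and> i < 3*m" | "i = 3*m" | "3*m < i \<and> i < 4*m" | "i = 4*m"
    | "4*m < i \<and> i \<le> 4*m+3" | "4*m+3 < i" by linarith
  then show ?thesis
  proof cases
    case 1
    have e: "\<And>j. ent m h i j = (if j = 4*m+1 \<or> j = 4*m+2 \<or> j = 4*m+3 then 2 else 0)"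
      using 1 by (auto simp: ent_def)
    have "?S i = 2 * (vv m h z (4*m+1) + vv m h z (4*m+2) + vv m h z (4*m+3))"
      by (simp only: e, subst sd3) auto
    also have "\<dots> = 12 * z * ?g^2" by (simp add: vv_def)
    also have "\<dots> = x * vv m h z i" using R 1 G0 by (simp add: vv_def)
    finally show ?thesis .
  next
    case 2
    have e: "\<And>j. ent m h i j = (if j = i - 1 then h else 0)"
      using 2 by (auto simp: ent_def)
    have "?S i = of_int h * vv m h z (i-1)" by (simp only: e, subst sd1) (use 2 in auto)
    also have "\<dots> = x * vv m h z i"
    proof -
      have "vv m h z (i-1) = val m h z (i-1)" "vv m h z i = val m h z i" using 2 by (auto intro!: vv1)
      then show ?thesis using 2 G1[of i] by simp
    qed
    finally show ?thesis .
  next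
    case 3
    have e: "\<And>j. ent m h i j = (if j = 0 then 1 else 0)"
      using 3 m1 by (auto simp: ent_def)
    have "?S i = vv m h z 0" by (simp only: e, subst sd1) (use 3 in auto)
    also have "\<dots> = x * vv m h z i" using 3 G2 by (simp add: vv1)
    finally show ?thesis .
  next
    case 4
    have e: "\<And>j. ent m h i j = (if j = i - 1 then 1 else 0)"
      using 4 by (auto simp: ent_def)
    have "?S i = vv m h z (i-1)" by (simp only: e, subst sd1) (use 4 in auto)
    also have "\<dots> = x * vv m h z i"
    proof -
      have "vv m h z (i-1) = val m h z (i-1)" "vv m h z i = val m h z i" using 4 by (auto intro!: vv1)
      then show ?thesis using 4 G3[of i] by simp
    qed
    finally show ?thesis .
  next
    case 5
    have e: "\<And>j. ent m h i j = (if j = m - 1 then h else if j = 2*m - 1 then 1 else 0)"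
      using 5 m1 by (auto simp: ent_def)
    have "?S i = of_int h * vv m h z (m-1) + 1 * vv m h z (2*m-1)"
      by (simp only: e, subst sd2) (use 5 m1 in auto)
    also have "\<dots> = x * vv m h z i" using 5 G4 by (simp add: vv1)
    finally show ?thesis .
  next
    case 6
    have e: "\<And>j. ent m h i j = (if j = i - 1 then h else 0)"
      using 6 by (auto simp: ent_def)
    have "?S i = of_int h * vv m h z (i-1)" by (simp only: e, subst sd1) (use 6 in auto)
    also have "\<dots> = of_int h * (?g * val m h z (i - 1 - 2*m))"
    proof -
      have "vv m h z (i-1) = ?g * val m h z (i - 1 - 2*m)" by (rule vv2) (use 6 in auto)
      then show ?thesis by simp
    qed
    also have "\<dots> = ?g * (x * val m h z (i - 2*m))"
    proof -
      have eq: "i - 1 - 2*m = i - 2*m - 1" by simp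
      have "of_int h * val m h z (i - 2*m - 1) = x * val m h z (i - 2*m)" by (rule G1) (use 6 in auto)
      then show ?thesis unfolding eq by (simp add: algebra_simps)
    qed
    also have "\<dots> = x * vv m h z i"
    proof -
      have "vv m h z i = ?g * val m h z (i - 2*m)" by (rule vv2) (use 6 in auto)
      then show ?thesis by simp
    qed
    finally show ?thesis .
  next
    case 7
    have e: "\<And>j. ent m h i j = (if j = 2*m then 1 else 0)"
      using 7 m1 by (auto simp: ent_def)
    have "?S i = vv m h z (2*m)" by (simp only: e, subst sd1) (use 7 in auto)
    also have "\<dots> = ?g * val m h z 0" using G0 by (simp add: vv1)
    also have "\<dots> = x * vv m h z i"
    proof -
      have "vv m h z i = ?g * val m h z (i - 2*m)" by (rule vv2) (use 7 in auto)
      then show ?thesis using 7 G2 by simp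
    qed
    finally show ?thesis .
  next
    case 8
    have e: "\<And>j. ent m h i j = (if j = i - 1 then 1 else 0)"
      using 8 by (auto simp: ent_def)
    have "?S i = vv m h z (i-1)" by (simp only: e, subst sd1) (use 8 in auto)
    also have "\<dots> = ?g * val m h z (i - 1 - 2*m)" by (rule vv2) (use 8 in auto)
    also have "\<dots> = ?g * (x * val m h z (i - 2*m))"
    proof -
      have eq: "i - 1 - 2*m = i - 2*m - 1" by simp
      have "val m h z (i - 2*m - 1) = x * val m h z (i - 2*m)" by (rule G3) (use 8 in auto)
      then show ?thesis unfolding eq by (simp add: algebra_simps)
    qed
    also have "\<dots> = x * vv m h z i"
    proof -
      have "vv m h z i = ?g * val m h z (i - 2*m)" by (rule vv2) (use 8 in auto)
      then show ?thesis by simp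
    qed
    finally show ?thesis .
  next
    case 9
    have e: "\<And>j. ent m h i j = (if j = 3*m - 1 then h else if j = 4*m - 1 then 1 else 0)"
      using 9 m1 by (auto simp: ent_def)
    have "?S i = of_int h * vv m h z (3*m-1) + 1 * vv m h z (4*m-1)"
      by (simp only: e, subst sd2) (use 9 m1 in auto)
    also have "\<dots> = ?g * (of_int h * val m h z (m-1) + val m h z (2*m-1))"
    proof -
      have "3*m-1-2*m = m-1" "4*m-1-2*m = 2*m-1" using m1 by auto
      moreover have "vv m h z (3*m-1) = ?g * val m h z (3*m-1-2*m)" by (rule vv2) (use m1 in auto)
      moreover have "vv m h z (4*m-1) = ?g * val m h z (4*m-1-2*m)" by (rule vv2) (use m1 in auto)
      ultimately show ?thesis by (simp add: algebra_simps)
    qed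
    also have "\<dots> = x * vv m h z i"
    proof -
      have "vv m h z i = ?g * val m h z (i - 2*m)" by (rule vv2) (use 9 in auto)
      then show ?thesis using 9 G4 by simp
    qed
    finally show ?thesis .
  next
    case 10
    have e: "\<And>j. ent m h i j = (if j = 4*m then 2 else 0)"
      using 10 by (auto simp: ent_def)
    have "?S i = 2 * vv m h z (4*m)" by (simp only: e, subst sd1) auto
    also have "\<dots> = x * vv m h z i" using 10 xz m1 G0
      by (simp add: vv_def power2_eq_square algebra_simps)
    finally show ?thesis .
  next
    case 11
    have e: "\<And>j. ent m h i j = 0" using 11 by (auto simp: ent_def)
    show ?thesis using 11 by (simp add: e vv_def)
  qed
qed

end



lemma pow_bound:
  fixes a :: real and k :: nat
  assumes a: "a \<ge> 2"
  shows "(1 + 1 / (2 * a^k))^(2*k) < 3"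
proof -
  have apos: "a^k > 0" using a by simp
  have kl: "real k < a^k"
  proof -
    have "real k < 2^k" using less_exp[of k] by (metis of_nat_less_iff of_nat_numeral of_nat_power)
    also have "\<dots> \<le> a^k" using a by (intro power_mono) auto
    finally show ?thesis .
  qed
  have "(1 + 1 / (2 * a^k))^(2*k) \<le> (exp (1 / (2 * a^k)))^(2*k)"
    by (intro power_mono exp_ge_add_one_self) (use apos in auto)
  also have "\<dots> = exp (real (2*k) * (1 / (2 * a^k)))" by (simp only: exp_of_nat_mult)
  also have "real (2*k) * (1 / (2 * a^k)) = real k / a^k" using apos by simp
  hence "exp (real (2*k) * (1 / (2 * a^k))) = exp (real k / a^k)" by simp
  also have "\<dots> < exp 1" using kl apos by simp
  also have "\<dots> \<le> 3" by (rule exp_le)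
  finally show ?thesis .
qed

lemma roots_exist:
  fixes a :: real and m :: nat
  assumes a: "a \<ge> 2"
  shows "\<exists>l r. l \<noteq> r \<and> \<bar>l - r\<bar> \<le> 1 / a^(m+3) \<and>
     l^(2*m+4) - 12 * (1 + a * l)^2 = 0 \<and> r^(2*m+4) - 12 * (1 + a * r)^2 = 0"
proof -
  define P :: "real poly" where "P = monom 1 (2*m+4) - [:12, 24*a, 12*a^2:]"
  have Pe: "poly P y = y^(2*m+4) - 12 * (1 + a * y)^2" for y
    by (simp add: P_def poly_monom power2_eq_square algebra_simps)
  define c where "c = - 1 / a"
  define t where "t = 1 / (2 * a^(m+3))"
  have apos: "a > 0" using a by simp
  have tpos: "t > 0" using apos by (simp add: t_def)
  have tlt: "t < 1 / a"
  proof -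
    have "a^1 \<le> a^(m+3)" using a by (intro power_increasing) auto
    then have "a < 2 * a^(m+3)" using apos by simp
    then show ?thesis unfolding t_def using apos by (simp add: field_simps)
  qed
  have e3: "a^(m+3) = a * a^(m+2)" by (simp add: power_add eval_nat_numeral)
  have at: "a * t = 1 / (2 * a^(m+2))" unfolding t_def e3 using apos by (simp add: field_simps)
  have ev: "even (2*m+4)" by simp
  have Pc: "poly P c > 0"
  proof -
    have "1 + a * c = 0" unfolding c_def using apos by simp
    moreover have "c^(2*m+4) > 0" using ev apos unfolding c_def
      by (simp add: zero_less_power_eq)
    ultimately show ?thesis by (simp add: Pe)
  qed
  have key: "(1/a + t)^(2*m+4) < 12 * (a*t)^2"
  proof -
    have s1: "1/a + t = (1/a) * (1 + a*t)" using apos by (simp add: field_simps)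
    have s2: "2*(m+2) = 2*m+4" by simp
    have "(1/a + t)^(2*m+4) = (1/a)^(2*m+4) * (1 + a*t)^(2*(m+2))"
      unfolding s2 by (subst s1) (simp only: power_mult_distrib)
    also have "\<dots> < (1/a)^(2*m+4) * 3"
      unfolding at using pow_bound[OF a, of "m+2"] apos by (intro mult_strict_left_mono) auto
    also have "\<dots> = 12 * (a*t)^2" unfolding at using apos
      by (simp add: power_mult_distrib field_simps power_add power_mult[symmetric])
    finally show ?thesis .
  qed
  have P1: "poly P (c - t) < 0"
  proof -
    have "c - t = -(1/a + t)" unfolding c_def by simp
    then have "(c - t)^(2*m+4) = (1/a + t)^(2*m+4)" using ev by (metis power_minus_even)
    moreover have "1 + a * (c - t) = - (a*t)" unfolding c_def using apos by (simp add: field_simps)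
    ultimately show ?thesis using key by (simp add: Pe)
  qed
  have P2: "poly P (c + t) < 0"
  proof -
    have "c + t = -(1/a - t)" unfolding c_def by simp
    then have "(c + t)^(2*m+4) = (1/a - t)^(2*m+4)" using ev by (metis power_minus_even)
    also have "\<dots> \<le> (1/a + t)^(2*m+4)" using tlt tpos by (intro power_mono) auto
    finally have "(c + t)^(2*m+4) < 12 * (a*t)^2" using key by simp
    moreover have "1 + a * (c + t) = a*t" unfolding c_def using apos by (simp add: field_simps)
    ultimately show ?thesis by (simp add: Pe)
  qed
  obtain l where l: "c - t < l" "l < c" "poly P l = 0" using poly_IVT_pos[of "c - t" c P] P1 Pc tpos by auto
  obtain r where r: "c < r" "r < c + t" "poly P r = 0" using poly_IVT_neg[of c "c + t" P] P2 Pc tpos by auto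
  have "\<bar>l - r\<bar> \<le> 2 * t" using l r by auto
  also have "2 * t = 1 / a^(m+3)" unfolding t_def using apos by simp
  finally show ?thesis using l r Pe by (intro exI[of _ l] exI[of _ r]) auto
qed



definition B3 :: "int mat" where
  "B3 = mat 7 7 (\<lambda>(i,j). if (i = 1 \<or> i = 2) \<and> j = 0 then 2 else if i = 3 \<and> j = 1 then 2
     else if i = 4 \<and> j = 1 then 1 else if i = 5 \<and> j = 4 then 1
     else if i = 0 \<and> (j = 1 \<or> j = 2 \<or> j = 3) then 2 else if i = 0 \<and> j = 5 then 1 else 0)"

lemma B3_eigen:
  fixes x :: real
  assumes "x^4 = 8*x^2 + 8*x + 2"
  shows "eigenvalue (map_mat real_of_int B3) x"
proof -
  define v where "v = vec 7 (\<lambda>i. [x^3, 2*x^2, 2*x^2, 4*x, 2*x, 2, 0] ! i)"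
  have c: "v \<in> carrier_vec 7" unfolding v_def by simp
  have nz: "v \<noteq> 0\<^sub>v 7"
  proof
    assume "v = 0\<^sub>v 7"
    then have "v $ 5 = 0" by simp
    then show False unfolding v_def by simp
  qed
  have "map_mat real_of_int B3 *\<^sub>v v = x \<cdot>\<^sub>v v"
  proof (rule eq_vecI)
    fix i assume "i < dim_vec (x \<cdot>\<^sub>v v)"
    then have i: "i < 7" unfolding v_def by simp
    have "i = 0 \<or> i = 1 \<or> i = 2 \<or> i = 3 \<or> i = 4 \<or> i = 5 \<or> i = 6" using i by linarith
    then show "(map_mat real_of_int B3 *\<^sub>v v) $ i = (x \<cdot>\<^sub>v v) $ i"
      using assms
      by (elim disjE) (simp_all add: B3_def v_def mult_mat_vec_def scalar_prod_def row_def
          numeral_eq_Suc atLeast0_lessThan_Suc power2_eq_square power3_eq_cube algebra_simps)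
  qed (simp add: B3_def v_def)
  then show ?thesis unfolding eigenvalue_def eigenvector_def using c nz by (auto simp: B3_def)
qed




lemma package:
  fixes B :: "int mat" and f :: "int poly" and l :: real
  assumes B: "B \<in> carrier_mat N N" and irr: "irreducible f"
   and el: "eigenvalue (map_mat real_of_int B) l" and fl: "poly (of_int_poly f) l = 0"
  shows "f dvd char_poly B"
proof -
  have B': "map_mat real_of_int B \<in> carrier_mat N N" using B by simp
  have "poly (char_poly (map_mat real_of_int B)) l = 0"
    using eigenvalue_root_char_poly[OF B'] el by auto
  moreover have "char_poly (map_mat real_of_int B) = of_int_poly (char_poly B)"
    by (rule of_int_hom.char_poly_hom[OF B])
  ultimately show ?thesis using irr_root_dvd[OF irr fl] by auto
qed

definition Bm :: "nat \<Rightarrow> int \<Rightarrow> int mat" where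
  "Bm m h = mat (4*m+7) (4*m+7) (\<lambda>(i,j). ent m h i j)"

lemma gen_eigen:
  fixes m :: nat and h :: int and x :: real
  assumes m1: "1 \<le> m" and x0: "x \<noteq> 0" and px: "x^(2*m+4) = 12 * (1 + real_of_int h^m * x)^2"
  shows "eigenvalue (map_mat real_of_int (Bm m h)) x"
proof -
  define z where "z = 1 / x"
  have xz: "x * z = 1" using x0 by (simp add: z_def)
  define a where "a = real_of_int h ^ m"
  have g: "val m h z (2*m) = z^(m+1) * (1 + a*x)"
  proof -
    have "val m h z (2*m) = z^m * (z + a)" by (simp add: val_def a_def)
    also have "z + a = z * (1 + a * x)" using xz by (simp add: algebra_simps)
    finally show ?thesis by (simp add: algebra_simps)
  qed
  have R: "12 * z * (val m h z (2*m))^2 = x"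
  proof -
    have g2: "(val m h z (2*m))^2 = z^(2*m+2) * (1 + a*x)^2"
      unfolding g power_mult_distrib power_mult[symmetric] by (simp add: algebra_simps)
    have "12 * z * (val m h z (2*m))^2 = z^(2*m+3) * (12 * (1 + a*x)^2)"
      unfolding g2 by (simp add: power_add power2_eq_square power3_eq_cube algebra_simps)
    also have "\<dots> = z^(2*m+3) * x^(2*m+4)" using px by (simp add: a_def)
    also have "\<dots> = (z*x)^(2*m+3) * x"
    proof -
      have "x^(2*m+4) = x^(2*m+3) * x" by (simp add: eval_nat_numeral)
      then show ?thesis by (simp add: power_mult_distrib)
    qed
    also have "\<dots> = x" using xz by (simp add: mult.commute)
    finally show ?thesis .
  qed
  define v where "v = vec (4*m+7) (vv m h z)"
  have c: "v \<in> carrier_vec (4*m+7)" unfolding v_def by simp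
  have nz: "v \<noteq> 0\<^sub>v (4*m+7)"
  proof
    assume "v = 0\<^sub>v (4*m+7)"
    then have "v $ 0 = 0" by simp
    then show False unfolding v_def using G0[OF m1 xz] by (simp add: vv_def)
  qed
  have "map_mat real_of_int (Bm m h) *\<^sub>v v = x \<cdot>\<^sub>v v"
  proof (rule eq_vecI)
    fix i assume "i < dim_vec (x \<cdot>\<^sub>v v)"
    then have i: "i < 4*m+7" unfolding v_def by simp
    have "(map_mat real_of_int (Bm m h) *\<^sub>v v) $ i = row (map_mat real_of_int (Bm m h)) i \<bullet> v"
      using i by (simp add: Bm_def)
    also have "\<dots> = (\<Sum>j\<in>{0..<4*m+7}. row (map_mat real_of_int (Bm m h)) i $ j * v $ j)"
      unfolding scalar_prod_def v_def by simp
    also have "\<dots> = (\<Sum>j\<in>{0..<4*m+7}. real_of_int (ent m h i j) * vv m h z j)"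
      by (rule sum.cong) (use i in \<open>auto simp: Bm_def v_def\<close>)
    also have "\<dots> = x * vv m h z i" by (rule row_eq[OF m1 xz R i])
    also have "\<dots> = (x \<cdot>\<^sub>v v) $ i" using i by (simp add: v_def)
    finally show "(map_mat real_of_int (Bm m h) *\<^sub>v v) $ i = (x \<cdot>\<^sub>v v) $ i" .
  qed (simp add: Bm_def v_def)
  then show ?thesis unfolding eigenvalue_def eigenvector_def using c nz by (auto simp: Bm_def)
qed

definition fm :: "nat \<Rightarrow> int \<Rightarrow> int poly" where
  "fm m h = monom 1 (2*m+4) - [:12, 24*h^m, 12*h^m*h^m:]"

lemma fm_coeff: "coeff (fm m h) i = (if i = 2*m+4 then 1 else 0) - (if i = 0 then 12 else if i = 1 then 24*h^m else if i = 2 then 12*h^m*h^m else 0)"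
  by (cases i; cases "i - 1"; cases "i - 2") (auto simp: fm_def coeff_monom coeff_pCons split: nat.splits)

lemma fm_degree: "degree (fm m h) = 2*m+4"
proof (rule antisym)
  show "degree (fm m h) \<le> 2*m+4" by (rule degree_le) (auto simp: fm_coeff)
  show "2*m+4 \<le> degree (fm m h)" by (rule le_degree) (auto simp: fm_coeff)
qed

lemma fm_irr: "irreducible (fm m h)"
proof (rule eisenstein[of 3])
  show "prime (3::int)" by simp
  show "lead_coeff (fm m h) = 1" by (simp add: fm_degree fm_coeff)
  show "1 \<le> degree (fm m h)" by (simp add: fm_degree)
  show "\<forall>i<degree (fm m h). 3 dvd coeff (fm m h) i" by (auto simp: fm_degree fm_coeff)
  show "\<not> 3^2 dvd coeff (fm m h) 0" by (simp add: fm_coeff)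
qed

lemma fm_poly: "poly (of_int_poly (fm m h)) (x::real) = x^(2*m+4) - 12 * (1 + real_of_int h^m * x)^2"
  by (simp add: fm_def poly_monom hom_distribs power2_eq_square algebra_simps)

lemma gen_case:
  fixes m :: nat and h :: int
  assumes m1: "1 \<le> m" and h2: "h \<ge> 2"
  shows "\<exists>B :: int mat. B \<in> carrier_mat (4*m+7) (4*m+7) \<and>
     (\<forall>i < 4*m+7. \<forall>j < 4*m+7. B $$ (i,j) \<in> {0..h}) \<and>
     (\<exists>l r :: real. l \<noteq> r \<and>
        eigenvalue (map_mat real_of_int B) l \<and> eigenvalue (map_mat real_of_int B) r \<and>
        \<bar>l - r\<bar> \<le> 1 / (real_of_int h)^(m*(m+3)) \<and>
        (\<exists>f :: int poly. f dvd char_poly B \<and> irreducible f \<and> degree f = 2*m+4 \<and>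
           poly (of_int_poly f) l = 0 \<and> poly (of_int_poly f) r = 0))"
proof -
  have a2: "real_of_int h ^ m \<ge> 2"
  proof -
    have h2r: "(2::real) \<le> of_int h" using h2 by simp
    have "of_int h ^ 1 \<le> (of_int h::real) ^ m" by (rule power_increasing) (use m1 h2r in auto)
    then show ?thesis using h2r by (metis order_trans power_one_right)
  qed
  obtain l r where lr: "l \<noteq> r" "\<bar>l - r\<bar> \<le> 1 / (real_of_int h ^ m)^(m+3)"
     "l^(2*m+4) - 12 * (1 + real_of_int h ^ m * l)^2 = 0" "r^(2*m+4) - 12 * (1 + real_of_int h ^ m * r)^2 = 0"
    using roots_exist[OF a2, of m] by blast
  have l0: "l \<noteq> 0" using lr(3) by (auto simp: power_0_left)
  have r0: "r \<noteq> 0" using lr(4) by (auto simp: power_0_left)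
  have Bc: "Bm m h \<in> carrier_mat (4*m+7) (4*m+7)" by (simp add: Bm_def)
  have el: "eigenvalue (map_mat real_of_int (Bm m h)) l" using gen_eigen[OF m1 l0] lr(3) by simp
  have er: "eigenvalue (map_mat real_of_int (Bm m h)) r" using gen_eigen[OF m1 r0] lr(4) by simp
  have fl: "poly (of_int_poly (fm m h)) l = 0" using lr(3) by (simp add: fm_poly)
  have fr: "poly (of_int_poly (fm m h)) r = 0" using lr(4) by (simp add: fm_poly)
  have ent: "\<forall>i < 4*m+7. \<forall>j < 4*m+7. Bm m h $$ (i,j) \<in> {0..h}"
    using h2 by (auto simp: Bm_def ent_def)
  have pw: "(real_of_int h ^ m)^(m+3) = real_of_int h ^ (m*(m+3))" by (simp add: power_mult)
  show ?thesis
    using Bc ent lr(1,2) el er fl fr package[OF Bc fm_irr el fl] fm_irr fm_degree pw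
    by (intro exI[of _ "Bm m h"] conjI exI[of _ l] exI[of _ r] exI[of _ "fm m h"]) auto
qed


lemma case3:
  fixes h :: int and c :: real
  assumes h2: "h \<ge> 2" and c: "1 \<le> c"
  shows "\<exists>B :: int mat. B \<in> carrier_mat 7 7 \<and>
     (\<forall>i < 7. \<forall>j < 7. B $$ (i,j) \<in> {0..h}) \<and>
     (\<exists>l r :: real. l \<noteq> r \<and>
        eigenvalue (map_mat real_of_int B) l \<and> eigenvalue (map_mat real_of_int B) r \<and>
        \<bar>l - r\<bar> \<le> c \<and>
        (\<exists>f :: int poly. f dvd char_poly B \<and> irreducible f \<and> degree f = 4 \<and>
           poly (of_int_poly f) l = 0 \<and> poly (of_int_poly f) r = 0))"
proof -
  define f :: "int poly" where "f = [:-2, -8, -8, 0, 1:]"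
  have fe: "poly (of_int_poly f) y = y^4 - 8*y^2 - 8*y - 2" for y :: real
    by (simp add: f_def power2_eq_square eval_nat_numeral algebra_simps)
  have fd: "degree f = 4" by (simp add: f_def)
  have firr: "irreducible f"
  proof (rule eisenstein[of 2])
    show "prime (2::int)" by simp
    show "lead_coeff f = 1" by (simp add: f_def)
    show "1 \<le> degree f" by (simp add: fd)
    show "\<forall>i<degree f. 2 dvd coeff f i"
    proof (intro allI impI)
      fix i assume "i < degree f"
      then have "i = 0 \<or> i = 1 \<or> i = 2 \<or> i = 3" by (simp add: fd) linarith
      then show "2 dvd coeff f i" by (auto simp: f_def eval_nat_numeral)
    qed
    show "\<not> 2^2 dvd coeff f 0" by (simp add: f_def)
  qed
  have p1: "poly (of_int_poly f) (-7/10) < (0::real)" unfolding fe by (simp add: eval_nat_numeral)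
  have p2: "poly (of_int_poly f) (-1/2) > (0::real)" unfolding fe by (simp add: eval_nat_numeral)
  have p3: "poly (of_int_poly f) (-3/10) < (0::real)" unfolding fe by (simp add: eval_nat_numeral)
  obtain l :: real where l: "-7/10 < l" "l < -1/2" "poly (of_int_poly f) l = 0"
    using poly_IVT_pos[OF _ p1 p2] by auto
  obtain r :: real where r: "-1/2 < r" "r < -3/10" "poly (of_int_poly f) r = 0"
    using poly_IVT_neg[OF _ p2 p3] by auto
  have Bc: "B3 \<in> carrier_mat 7 7" by (simp add: B3_def)
  have el: "eigenvalue (map_mat real_of_int B3) l" using l(3) unfolding fe by (intro B3_eigen) simp
  have er: "eigenvalue (map_mat real_of_int B3) r" using r(3) unfolding fe by (intro B3_eigen) simp
  have ent: "\<forall>i < 7. \<forall>j < 7. B3 $$ (i,j) \<in> {0..h}" using h2 by (auto simp: B3_def)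
  show ?thesis
    using Bc ent el er l r package[OF Bc firr el l(3)] firr fd c
    by (intro exI[of _ B3] conjI exI[of _ l] exI[of _ r] exI[of _ f]) auto
qed

definition B1 :: "int mat" where
  "B1 = mat 3 3 (\<lambda>(i,j). if i = 0 \<and> j = 1 then 2 else if i = 1 \<and> j = 0 then 1 else 0)"

lemma B1_eigen:
  fixes x :: real
  assumes "x^2 = 2"
  shows "eigenvalue (map_mat real_of_int B1) x"
proof -
  define v where "v = vec 3 (\<lambda>i. [x, 1, 0] ! i)"
  have c: "v \<in> carrier_vec 3" unfolding v_def by simp
  have nz: "v \<noteq> 0\<^sub>v 3"
  proof
    assume "v = 0\<^sub>v 3"
    then have "v $ 1 = 0" by simp
    then show False unfolding v_def by simp
  qed
  have "map_mat real_of_int B1 *\<^sub>v v = x \<cdot>\<^sub>v v"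
  proof (rule eq_vecI)
    fix i assume "i < dim_vec (x \<cdot>\<^sub>v v)"
    then have i: "i < 3" unfolding v_def by simp
    have "i = 0 \<or> i = 1 \<or> i = 2" using i by linarith
    then show "(map_mat real_of_int B1 *\<^sub>v v) $ i = (x \<cdot>\<^sub>v v) $ i"
      using assms
      by (elim disjE) (simp_all add: B1_def v_def mult_mat_vec_def scalar_prod_def row_def
          numeral_eq_Suc atLeast0_lessThan_Suc power2_eq_square algebra_simps)
  qed (simp add: B1_def v_def)
  then show ?thesis unfolding eigenvalue_def eigenvector_def using c nz by (auto simp: B1_def)
qed

lemma case1:
  fixes h :: int and c :: real
  assumes h2: "h \<ge> 2" and c: "4 \<le> c"
  shows "\<exists>B :: int mat. B \<in> carrier_mat 3 3 \<and>
     (\<forall>i < 3. \<forall>j < 3. B $$ (i,j) \<in> {0..h}) \<and>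
     (\<exists>l r :: real. l \<noteq> r \<and>
        eigenvalue (map_mat real_of_int B) l \<and> eigenvalue (map_mat real_of_int B) r \<and>
        \<bar>l - r\<bar> \<le> c \<and>
        (\<exists>f :: int poly. f dvd char_poly B \<and> irreducible f \<and> degree f = 2 \<and>
           poly (of_int_poly f) l = 0 \<and> poly (of_int_poly f) r = 0))"
proof -
  define f :: "int poly" where "f = [:-2, 0, 1:]"
  have fe: "poly (of_int_poly f) y = y^2 - 2" for y :: real
    by (simp add: f_def power2_eq_square algebra_simps)
  have fd: "degree f = 2" by (simp add: f_def)
  have firr: "irreducible f"
  proof (rule eisenstein[of 2])
    show "prime (2::int)" by simp
    show "lead_coeff f = 1" by (simp add: f_def)
    show "1 \<le> degree f" by (simp add: fd)
    show "\<forall>i<degree f. 2 dvd coeff f i"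
    proof (intro allI impI)
      fix i assume "i < degree f"
      then have "i = 0 \<or> i = 1" by (simp add: fd) linarith
      then show "2 dvd coeff f i" by (auto simp: f_def eval_nat_numeral)
    qed
    show "\<not> 2^2 dvd coeff f 0" by (simp add: f_def)
  qed
  define l :: real where "l = sqrt 2"
  define r :: real where "r = - sqrt 2"
  have l2: "l^2 = 2" and r2: "r^2 = 2" by (simp_all add: l_def r_def)
  have lr: "l \<noteq> r" by (simp add: l_def r_def)
  have s2: "sqrt (2::real) \<le> 2"
  proof -
    have "sqrt (2::real) \<le> sqrt 4" by (rule real_sqrt_le_mono) simp
    also have "sqrt (4::real) = 2" by (rule real_sqrt_unique) auto
    finally show ?thesis .
  qed
  have d: "\<bar>l - r\<bar> \<le> 4" using s2 by (simp add: l_def r_def)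
  have Bc: "B1 \<in> carrier_mat 3 3" by (simp add: B1_def)
  have el: "eigenvalue (map_mat real_of_int B1) l" using l2 by (rule B1_eigen)
  have er: "eigenvalue (map_mat real_of_int B1) r" using r2 by (rule B1_eigen)
  have fl: "poly (of_int_poly f) l = 0" using l2 fe by simp
  have fr: "poly (of_int_poly f) r = 0" using r2 fe by simp
  have ent: "\<forall>i < 3. \<forall>j < 3. B1 $$ (i,j) \<in> {0..h}" using h2 by (auto simp: B1_def)
  show ?thesis
    using Bc ent el er lr d fl fr package[OF Bc firr el fl] firr fd c
    by (intro exI[of _ B1] conjI exI[of _ l] exI[of _ r] exI[of _ f]) auto
qed

theorem mainTheorem1:
  fixes n :: nat and h :: int
  assumes "odd n" and "n > 0" and "h \<ge> 2"
  shows "\<exists>B :: int mat. B \<in> carrier_mat (2*n+1) (2*n+1) \<and>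
     (\<forall>i < 2*n+1. \<forall>j < 2*n+1. B $$ (i,j) \<in> {0..h}) \<and>
     (\<exists>l m :: real. l \<noteq> m \<and>
        eigenvalue (map_mat real_of_int B) l \<and> eigenvalue (map_mat real_of_int B) m \<and>
        \<bar>l - m\<bar> \<le> real_of_int h powr (- ((real n + 3) * (real n - 3) / 4)) \<and>
        (\<exists>f :: int poly. f dvd char_poly B \<and> irreducible f \<and> degree f = n + 1 \<and>
           poly (of_int_poly f) l = 0 \<and> poly (of_int_poly f) m = 0))"
proof -
  obtain k where k: "n = 2*k+1" using assms(1) oddE by blast
  have hpos: "real_of_int h > 0" using assms(3) by simp
  consider "k = 0" | "k = 1" | "k \<ge> 2" by linarith
  then show ?thesis
  proof cases
    case 1
    then have n: "n = 1" using k by simp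
    have ex: "- ((real n + 3) * (real n - 3) / 4) = real 2" using n by simp
    have pw: "real_of_int h powr (- ((real n + 3) * (real n - 3) / 4)) = real_of_int h ^ 2"
      unfolding ex using hpos by (rule powr_realpow)
    have h4: "(4::real) \<le> real_of_int h ^ 2"
    proof -
      have "(2::real) ^ 2 \<le> real_of_int h ^ 2" using assms(3) by (intro power_mono) auto
      then show ?thesis by simp
    qed
    have e: "2*n+1 = 3" "n + 1 = 2" using n by auto
    show ?thesis unfolding pw e by (rule case1[OF assms(3) h4])
  next
    case 2
    then have n: "n = 3" using k by simp
    have ex: "- ((real n + 3) * (real n - 3) / 4) = 0" using n by simp
    have pw: "real_of_int h powr (- ((real n + 3) * (real n - 3) / 4)) = 1"
      unfolding ex using hpos by simp
    have e: "2*n+1 = 7" "n + 1 = 4" using n by auto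
    show ?thesis unfolding pw e by (rule case3[OF assms(3)]) simp
  next
    case 3
    define m where "m = k - 1"
    have m1: "1 \<le> m" and n: "n = 2*m+3" using 3 k by (auto simp: m_def)
    have e1: "2*n+1 = 4*m+7" and e2: "n + 1 = 2*m+4" using n by auto
    have rn: "real n = 2 * real m + 3" using n by simp
    have ex: "- ((real n + 3) * (real n - 3) / 4) = - real (m*(m+3))"
      unfolding rn by (simp add: algebra_simps)
    have pw: "real_of_int h powr (- ((real n + 3) * (real n - 3) / 4)) = 1 / real_of_int h ^ (m*(m+3))"
    proof -
      have "real_of_int h powr (- real (m*(m+3))) = inverse (real_of_int h powr real (m*(m+3)))"
        by (rule powr_minus)
      also have "real_of_int h powr real (m*(m+3)) = real_of_int h ^ (m*(m+3))"
        by (rule powr_realpow[OF hpos])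
      finally show ?thesis unfolding ex by (simp add: divide_inverse)
    qed
    show ?thesis unfolding pw e1 e2 by (rule gen_case[OF m1 assms(3)])
  qed
qed

end
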